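(* For all $M>0$, all $q$ with $|q|<1$ and all $\epsilon>0$ there exist constants $C_1,C_2>0$ such that for all $p$ with $|p|<|q|$ we have $C_1\le|(z;p,q)|\le C_2$ for all $z$ with $|z|\le M$ and $|1-z/w|>\epsilon$ for every zero $w$ of $(z;p,q)$.
   Context: $(z;p,q)=\prod_{r,s\ge0}(1-zp^rq^s)$; its zeros are $p^{-r}q^{-s}$, $r,s\ge0$. The paper phrases the condition on $z$ as "$z$ away from the set of zeros". *)

theory Defs
  imports "HOL-Analysis.Analysis"
begin

definition dpoch :: "complex \<Rightarrow> complex \<Rightarrow> complex \<Rightarrow> complex" where
  "dpoch z p q = (\<Prod>r. \<Prod>s. (1 - z * p ^ r * q ^ s))"

text \<open>Zeros of z |-> (z;p,q): the points w = p^(-r) q^(-s), i.e. those w with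
  w p^r q^s = 1 for some r,s >= 0 (this also covers p = 0 correctly).\<close>
definition dpoch_zeros :: "complex \<Rightarrow> complex \<Rightarrow> complex set" where
  "dpoch_zeros p q = {w. \<exists>r s::nat. w * p ^ r * q ^ s = 1}"

end

theory Submission imports Defs begin

lemma gen_prod:
  fixes f :: "nat \<Rightarrow> complex" and b :: "nat \<Rightarrow> real"
  assumes bnn: "\<And>n. b n \<ge> 0" and bs: "summable b" and K: "K \<ge> 0"
    and lo: "\<And>n. exp (- K * b n) \<le> norm (f n)"
    and up: "\<And>n. norm (f n - 1) \<le> b n"
    and B: "suminf b \<le> B"
  shows "convergent_prod f \<and> exp (- K * B) \<le> norm (prodinf f) \<and> norm (prodinf f - 1) \<le> exp B - 1"
proof -
  have "summable (\<lambda>i. norm (f i - 1))"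
    by (rule summable_comparison_test[OF _ bs]) (use up in auto)
  hence cp: "convergent_prod f"
    by (intro abs_convergent_prod_imp_convergent_prod summable_imp_abs_convergent_prod)
  have lim: "(\<lambda>n. \<Prod>i\<le>n. f i) \<longlonglongrightarrow> prodinf f" by (rule convergent_prod_LIMSEQ[OF cp])
  have ps: "sum b {..n} \<le> B" for n
    using sum_le_suminf[OF bs, of "{..n}"] bnn B by force
  have l1: "exp (- K * B) \<le> norm (\<Prod>i\<le>n. f i)" for n
  proof -
    have "exp (- K * B) \<le> exp (- K * sum b {..n})"
      using ps[of n] K by (simp add: mult_left_mono)
    also have "\<dots> = (\<Prod>i\<le>n. exp (- K * b i))"
      by (simp add: exp_sum[symmetric] sum_distrib_left sum_negf)
    also have "\<dots> \<le> (\<Prod>i\<le>n. norm (f i))"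
      by (intro prod_mono) (use lo in auto)
    also have "\<dots> = norm (\<Prod>i\<le>n. f i)" by (simp add: prod_norm)
    finally show ?thesis .
  qed
  have l2: "norm ((\<Prod>i\<le>n. f i) - 1) \<le> exp B - 1" for n
  proof -
    have "norm ((\<Prod>i\<le>n. f i) - 1) = norm ((\<Prod>i\<le>n. 1 + (f i - 1)) - 1)" by simp
    also have "\<dots> \<le> (\<Prod>i\<le>n. 1 + norm (f i - 1)) - 1"
      by (rule norm_prod_minus1_le_prod_minus1)
    also have "\<dots> \<le> (\<Prod>i\<le>n. 1 + b i) - 1"
      by (smt (verit) prod_mono norm_ge_zero up)
    also have "\<dots> \<le> exp (sum b {..n}) - 1"
      using prod_le_exp_sum[of "{..n}" b] bnn by auto
    also have "\<dots> \<le> exp B - 1" using ps[of n] by simp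
    finally show ?thesis .
  qed
  have "exp (- K * B) \<le> norm (prodinf f)"
    by (rule tendsto_le[OF _ tendsto_norm[OF lim] tendsto_const]) (use l1 in auto)
  moreover have "norm (prodinf f - 1) \<le> exp B - 1"
    by (rule tendsto_le[OF _ tendsto_const tendsto_norm[OF tendsto_diff[OF lim tendsto_const]]]) (use l2 in auto)
  ultimately show ?thesis using cp by blast
qed

lemma factor_lb:
  fixes x :: complex and e :: real
  assumes e: "e > 0" and h: "x = 0 \<or> norm (1 - x) > e"
  shows "exp (- (2 + 2 * \<bar>ln e\<bar>) * norm x) \<le> norm (1 - x)"
proof (cases "norm x \<le> 1/2")
  case True
  define y where "y = norm x"
  have y: "0 \<le> y" "y \<le> 1/2" using True by (auto simp: y_def)
  have "exp (- (2 + 2 * \<bar>ln e\<bar>) * y) \<le> exp (- 2 * y)"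
    using y mult_nonneg_nonneg[of "\<bar>ln e\<bar>" y] by (simp add: algebra_simps)
  also have "exp (- 2 * y) = 1 / exp (2*y)" by (simp add: exp_minus field_simps)
  also have "\<dots> \<le> 1 / (1 + 2*y)"
    using exp_ge_add_one_self[of "2*y"] y by (intro divide_left_mono) auto
  also have "\<dots> \<le> 1 - y" using y mult_nonneg_nonneg[of y "1 - 2*y"] by (simp add: field_simps algebra_simps)
  also have "1 - y \<le> norm (1 - x)" using norm_triangle_ineq2[of 1 x] by (simp add: y_def)
  finally show ?thesis by (simp add: y_def)
next
  case False
  hence hx: "norm (1 - x) > e" using h by auto
  have "exp (- (2 + 2 * \<bar>ln e\<bar>) * norm x) \<le> exp (- (2 + 2 * \<bar>ln e\<bar>) * (1/2))"
    using False mult_left_mono[of "1/2" "norm x" "2 + 2 * \<bar>ln e\<bar>"] by (intro exp_mono) (auto simp: algebra_simps)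
  also have "\<dots> \<le> exp (ln e)" by simp
  also have "\<dots> = e" using e by simp
  finally show ?thesis using hx by simp
qed

lemma exp_m1_le: "y \<ge> (0::real) \<Longrightarrow> exp y - 1 \<le> y * exp y"
proof -
  assume y: "y \<ge> 0"
  have "1 - y \<le> exp (-y)" using exp_ge_add_one_self[of "-y"] by simp
  hence "(1 - y) * exp y \<le> exp (-y) * exp y" by (simp add: mult_right_mono)
  thus ?thesis by (simp add: exp_minus field_simps)
qed


theorem lemmaA2:
  fixes M \<epsilon> :: real and q :: complex
  assumes "M > 0" and "norm q < 1" and "\<epsilon> > 0"
  shows "\<exists>C1 C2::real. C1 > 0 \<and> C2 > 0 \<and>
    (\<forall>p z. norm p < norm q \<longrightarrow> norm z \<le> M \<longrightarrow>
       (\<forall>w \<in> dpoch_zeros p q. norm (1 - z / w) > \<epsilon>) \<longrightarrow>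
       C1 \<le> norm (dpoch z p q) \<and> norm (dpoch z p q) \<le> C2)"
proof -
  note M = assms(1) and Q1 = assms(2) and e = assms(3)
  define Q where "Q = norm q"
  define K where "K = 2 + 2 * \<bar>ln \<epsilon>\<bar>"
  define c where "c = M / (1 - Q)"
  define B' where "B' = exp c * (M / (1 - Q)^2)"
  have Q: "0 \<le> Q" "Q < 1" using Q1 by (auto simp: Q_def)
  have K: "K \<ge> 0" by (simp add: K_def)
  have c0: "c \<ge> 0" using M Q by (simp add: c_def)
  have main: "exp (- K * B') \<le> norm (dpoch z p q) \<and> norm (dpoch z p q) \<le> exp B'"
    if p: "norm p < norm q" and z: "norm z \<le> M"
      and zer: "\<forall>w \<in> dpoch_zeros p q. norm (1 - z / w) > \<epsilon>" for p z
  proof -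
    define t where "t = norm p"
    define a where "a = norm z"
    have t: "0 \<le> t" "t < Q" using p by (auto simp: t_def Q_def)
    have a: "0 \<le> a" "a \<le> M" using z by (auto simp: a_def)
    define f where "f r s = 1 - z * p ^ r * q ^ s" for r s :: nat
    define br where "br r s = a * t ^ r * Q ^ s" for r s :: nat
    define Br where "Br r = a * t ^ r / (1 - Q)" for r :: nat
    have fac: "z * p ^ r * q ^ s = 0 \<or> norm (1 - z * p ^ r * q ^ s) > \<epsilon>" for r s :: nat
    proof (cases "p ^ r * q ^ s = 0")
      case True thus ?thesis by (simp add: mult.assoc)
    next
      case False
      have "inverse (p ^ r * q ^ s) \<in> dpoch_zeros p q"
      proof -
        have "inverse (p ^ r * q ^ s) * p ^ r * q ^ s = 1" using False by (simp add: field_simps)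
        thus ?thesis unfolding dpoch_zeros_def by blast
      qed
      with zer have "norm (1 - z / inverse (p ^ r * q ^ s)) > \<epsilon>" by blast
      thus ?thesis by (simp add: divide_inverse mult.assoc)
    qed
    have gsum: "(\<lambda>s. br r s) sums Br r" for r
    proof -
      have "(\<lambda>s. Q ^ s) sums (1 / (1 - Q))" using geometric_sums[of Q] Q by simp
      from sums_mult[OF this, of "a * t ^ r"] show ?thesis
        by (simp add: br_def Br_def)
    qed
    have inner: "convergent_prod (f r) \<and> exp (- K * Br r) \<le> norm (prodinf (f r))
                 \<and> norm (prodinf (f r) - 1) \<le> exp (Br r) - 1" for r
    proof (rule gen_prod[of "br r"])
      show "0 \<le> br r n" for n using a t Q by (simp add: br_def)
      show "summable (br r)" using gsum[of r] by (simp add: sums_iff)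
      show "K \<ge> 0" by (rule K)
      show "exp (- K * br r n) \<le> norm (f r n)" for n
        using factor_lb[OF e fac[of r n]]
        by (simp add: K_def f_def br_def a_def t_def Q_def norm_mult norm_power)
      show "norm (f r n - 1) \<le> br r n" for n
        by (simp add: f_def br_def a_def t_def Q_def norm_mult norm_power)
      show "suminf (br r) \<le> Br r" using gsum[of r] by (simp add: sums_iff)
    qed
    define g where "g r = prodinf (f r)" for r
    define b' where "b' r = exp (Br r) - 1" for r
    have Br0: "0 \<le> Br r" for r using a t Q by (simp add: Br_def)
    have Brc: "Br r \<le> c" for r
    proof -
      have "a * t ^ r \<le> M * 1" using a t Q by (intro mult_mono power_le_one) auto
      thus ?thesis using Q by (simp add: Br_def c_def divide_right_mono)
    qed
    have Bsum: "Br sums (a / ((1 - t) * (1 - Q)))"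
    proof -
      have "(\<lambda>r. t ^ r) sums (1 / (1 - t))" using geometric_sums[of t] t Q by simp
      from sums_mult[OF this, of "a / (1 - Q)"] show ?thesis
        by (simp add: Br_def[abs_def] field_simps)
    qed
    have b'le: "b' r \<le> exp c * Br r" for r
    proof -
      have "b' r \<le> Br r * exp (Br r)" unfolding b'_def by (rule exp_m1_le[OF Br0])
      also have "\<dots> \<le> Br r * exp c" using Brc[of r] Br0[of r] by (intro mult_left_mono) auto
      finally show ?thesis by (simp add: mult.commute)
    qed
    have b'0: "0 \<le> b' r" for r using Br0[of r] by (simp add: b'_def)
    have sB: "summable (\<lambda>r. exp c * Br r)" using Bsum by (intro summable_mult) (simp add: sums_iff)
    have sb': "summable b'"
      by (rule summable_comparison_test[OF _ sB]) (use b'le b'0 in auto)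
    have "suminf b' \<le> (\<Sum>r. exp c * Br r)"
      by (rule suminf_le[OF b'le sb' sB])
    also have "\<dots> = exp c * (a / ((1 - t) * (1 - Q)))"
      using Bsum by (simp add: suminf_mult sums_iff)
    also have "\<dots> \<le> B'"
    proof -
      have "a / ((1 - t) * (1 - Q)) \<le> M / ((1 - Q) * (1 - Q))"
        using a t Q by (intro frac_le mult_mono) auto
      thus ?thesis unfolding B'_def by (intro mult_left_mono) (auto simp: power2_eq_square)
    qed
    finally have sle: "suminf b' \<le> B'" .
    have outer: "convergent_prod g \<and> exp (- K * B') \<le> norm (prodinf g) \<and> norm (prodinf g - 1) \<le> exp B' - 1"
    proof (rule gen_prod[of b'])
      show "0 \<le> b' n" for n by (rule b'0)
      show "summable b'" by (rule sb')
      show "K \<ge> 0" by (rule K)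
      show "exp (- K * b' n) \<le> norm (g n)" for n
      proof -
        have "Br n \<le> b' n" using exp_ge_add_one_self[of "Br n"] unfolding b'_def by linarith
        hence "exp (- K * b' n) \<le> exp (- K * Br n)" using K by (simp add: mult_left_mono)
        thus ?thesis using inner[of n] unfolding g_def by linarith
      qed
      show "norm (g n - 1) \<le> b' n" for n using inner[of n] by (simp add: g_def b'_def)
      show "suminf b' \<le> B'" by (rule sle)
    qed
    have eq: "dpoch z p q = prodinf g" by (simp add: dpoch_def g_def[abs_def] f_def[abs_def])
    have "norm (prodinf g) \<le> 1 + norm (prodinf g - 1)" using norm_triangle_ineq[of 1 "prodinf g - 1"] by simp
    thus ?thesis using outer eq by auto
  qed
  show ?thesis
    by (rule exI[of _ "exp (- K * B')"], rule exI[of _ "exp B'"]) (use main in auto)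
qed

end
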